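(* A linear code $C\subseteq\mathbb{F}_3^n$ is trifferent if and only if it is minimal.
   Context: A linear code $C\subseteq\mathbb{F}_3^n$ is trifferent if for any three distinct $x,y,z\in C$ there is a coordinate $i$ with $\{x_i,y_i,z_i\}=\mathbb{F}_3$. The support of $v$ is $\mathrm{supp}(v)=\{i: v_i\ne 0\}$. A linear code $C$ is minimal if for all $u,v\in C$, $\mathrm{supp}(u)\subsetneq\mathrm{supp}(v)$ implies $u=0$ (equivalently, every nonzero codeword has inclusion-minimal support among nonzero codewords). *)

theory Defs
  imports Main "HOL-Library.Numeral_Type"
begin

text \<open>Vectors of F_3^n are functions nat => 3 (the type 3 of integers mod 3 from
Numeral_Type) that vanish outside the coordinates 0..n-1.\<close>

definition vecs3 :: "nat \<Rightarrow> (nat \<Rightarrow> 3) set" where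
  "vecs3 n = {x. \<forall>i\<ge>n. x i = 0}"

definition linear_code :: "nat \<Rightarrow> (nat \<Rightarrow> 3) set \<Rightarrow> bool" where
  "linear_code n C \<longleftrightarrow> C \<subseteq> vecs3 n \<and> (\<lambda>_. 0) \<in> C
     \<and> (\<forall>x\<in>C. \<forall>y\<in>C. (\<lambda>i. x i + y i) \<in> C)
     \<and> (\<forall>a::3. \<forall>x\<in>C. (\<lambda>i. a * x i) \<in> C)"

definition trifferent :: "nat \<Rightarrow> (nat \<Rightarrow> 3) set \<Rightarrow> bool" where
  "trifferent n C \<longleftrightarrow> (\<forall>x\<in>C. \<forall>y\<in>C. \<forall>z\<in>C. x \<noteq> y \<and> y \<noteq> z \<and> x \<noteq> z \<longrightarrow>
     (\<exists>i<n. {x i, y i, z i} = (UNIV :: 3 set)))"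

definition supp :: "nat \<Rightarrow> (nat \<Rightarrow> 3) \<Rightarrow> nat set" where
  "supp n v = {i. i < n \<and> v i \<noteq> 0}"

definition minimal_code :: "nat \<Rightarrow> (nat \<Rightarrow> 3) set \<Rightarrow> bool" where
  "minimal_code n C \<longleftrightarrow> (\<forall>u\<in>C. \<forall>v\<in>C. supp n u \<subset> supp n v \<longrightarrow> u = (\<lambda>_. 0))"

end

theory Submission
  imports Defs
begin

lemma cases3: "(x::3) = 0 \<or> x = 1 \<or> x = 2"
proof (cases x)
  case (of_int z)
  then have "z = 0 \<or> z = 1 \<or> z = 2" by simp presburger
  then show ?thesis using of_int by auto
qed

lemma univ3: "{a,b,c} = (UNIV::3 set) \<longleftrightarrow> a \<noteq> b \<and> b \<noteq> c \<and> a \<noteq> c"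
proof
  assume "{a,b,c} = (UNIV::3 set)"
  then have "card {a,b,c} = 3" by simp
  then show "a \<noteq> b \<and> b \<noteq> c \<and> a \<noteq> c" by (auto simp: card_insert_if split: if_splits)
next
  assume "a \<noteq> b \<and> b \<noteq> c \<and> a \<noteq> c"
  then have "card {a,b,c} = CARD(3)" by simp
  then show "{a,b,c} = (UNIV::3 set)" by (simp add: card_eq_UNIV_imp_eq_UNIV)
qed

lemma p1: "(a::3) - b = a + 2 * b"
  using cases3[of a] cases3[of b] by auto
lemma p2: "\<lbrakk>(u::3) \<noteq> 0; v \<noteq> 0\<rbrakk> \<Longrightarrow> v + u = 0 \<or> v + 2*u = 0"
  using cases3[of u] cases3[of v] by auto
lemma p3: "(u::3) \<noteq> 0 \<Longrightarrow> v + u \<noteq> v + 2*u"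
  using cases3[of u] cases3[of v] by auto
lemma p4: "\<lbrakk>\<not>((a::3)\<noteq>b \<and> b\<noteq>c \<and> a\<noteq>c); b - c \<noteq> 0\<rbrakk> \<Longrightarrow> (b-a)+(c-a) \<noteq> 0"
  using cases3[of a] cases3[of b] cases3[of c] by auto
lemma p5: "\<lbrakk>\<not>((a::3)\<noteq>b \<and> b\<noteq>c \<and> a\<noteq>c); b - a \<noteq> 0; c - a \<noteq> 0\<rbrakk> \<Longrightarrow> b - c = 0 \<and> (b-a)+(c-a) \<noteq> 0"
  using cases3[of a] cases3[of b] cases3[of c] by auto

lemma diff_in:
  assumes "linear_code n C" "x \<in> C" "y \<in> C"
  shows "(\<lambda>i. y i - x i) \<in> C"
proof -
  have sm: "\<forall>a::3. \<forall>x\<in>C. (\<lambda>i. a * x i) \<in> C"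
    and ad: "\<forall>x\<in>C. \<forall>y\<in>C. (\<lambda>i. x i + y i) \<in> C"
    using assms(1) unfolding linear_code_def by blast+
  have x2: "(\<lambda>i. 2 * x i) \<in> C" using sm assms(2) by blast
  have "(\<lambda>i. y i + 2 * x i) \<in> C" using ad[rule_format, OF assms(3) x2] by simp
  then show ?thesis by (simp add: p1)
qed

lemma add_in:
  assumes "linear_code n C" "x \<in> C" "y \<in> C"
  shows "(\<lambda>i. y i + x i) \<in> C"
  using assms unfolding linear_code_def by blast

lemma nz_lt:
  assumes "linear_code n C" "x \<in> C" "x \<noteq> (\<lambda>_. 0)"
  obtains i where "i < n" "x i \<noteq> 0"
proof -
  obtain j where j: "x j \<noteq> 0" using assms(3) by auto
  have "x \<in> vecs3 n" using assms unfolding linear_code_def by blast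
  have "j < n"
  proof (rule ccontr)
    assume "\<not> j < n"
    then have "x j = 0" using \<open>x \<in> vecs3 n\<close> unfolding vecs3_def by simp
    then show False using j by simp
  qed
  then show ?thesis using j that by blast
qed

theorem theorem6p2:
  fixes n :: nat and C :: "(nat \<Rightarrow> 3) set"
  assumes "linear_code n C"
  shows "trifferent n C \<longleftrightarrow> minimal_code n C"
proof
  assume T: "trifferent n C"
  show "minimal_code n C"
    unfolding minimal_code_def
  proof (intro ballI impI)
    fix u v assume u: "u \<in> C" and v: "v \<in> C" and sub: "supp n u \<subset> supp n v"
    show "u = (\<lambda>_. 0)"
    proof (rule ccontr)
      assume un: "u \<noteq> (\<lambda>_. 0)"
      obtain i0 where i0: "i0 \<in> supp n v" "i0 \<notin> supp n u" using sub by blast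
      then have ui0: "u i0 = 0" and vi0: "v i0 \<noteq> 0" unfolding supp_def by auto
      define x where "x = (\<lambda>i. v i + u i)"
      define y where "y = (\<lambda>i. v i + 2 * u i)"
      define z where "z = (\<lambda>_::nat. 0::3)"
      have xC: "x \<in> C" unfolding x_def using add_in[OF assms u v] by simp
      have sm: "\<forall>a::3. \<forall>x\<in>C. (\<lambda>i. a * x i) \<in> C"
        using assms(1) unfolding linear_code_def by blast
      have u2: "(\<lambda>i. 2 * u i) \<in> C" using sm u by blast
      have yC: "y \<in> C" unfolding y_def using add_in[OF assms u2 v] by simp
      have zC: "z \<in> C" using assms unfolding linear_code_def z_def by blast
      obtain j where "u j \<noteq> 0" using un by auto
      then have "x j \<noteq> y j" unfolding x_def y_def using p3 by blast
      then have xy: "x \<noteq> y" by auto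
      have "x i0 \<noteq> z i0" "y i0 \<noteq> z i0" unfolding x_def y_def z_def using ui0 vi0 by auto
      then have xz: "x \<noteq> z" and yz: "y \<noteq> z" by auto
      obtain i where i: "i < n" "{x i, y i, z i} = UNIV"
        using T[unfolded trifferent_def, rule_format, OF xC yC zC] xy xz yz by blast
      then have d: "x i \<noteq> y i" "y i \<noteq> z i" "x i \<noteq> z i" using univ3 by blast+
      then have "u i \<noteq> 0" unfolding x_def y_def by auto
      then have "i \<in> supp n u" using i(1) unfolding supp_def by auto
      then have "v i \<noteq> 0" using sub unfolding supp_def by auto
      then have "x i = 0 \<or> y i = 0" unfolding x_def y_def using p2 \<open>u i \<noteq> 0\<close> by blast
      then show False using d unfolding z_def by auto
    qed
  qed
next
  assume M: "minimal_code n C"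
  show "trifferent n C"
    unfolding trifferent_def
  proof (intro ballI impI)
    fix x y z assume xC: "x \<in> C" and yC: "y \<in> C" and zC: "z \<in> C"
      and dist: "x \<noteq> y \<and> y \<noteq> z \<and> x \<noteq> z"
    show "\<exists>i<n. {x i, y i, z i} = UNIV"
    proof (rule ccontr)
      assume "\<not> (\<exists>i<n. {x i, y i, z i} = UNIV)"
      then have nd: "\<not> (x i \<noteq> y i \<and> y i \<noteq> z i \<and> x i \<noteq> z i)" if "i < n" for i
      proof -
        have "{x i, y i, z i} \<noteq> UNIV" using that \<open>\<not> (\<exists>i<n. {x i, y i, z i} = UNIV)\<close> by blast
        then show ?thesis by (simp add: univ3)
      qed
      define p where "p = (\<lambda>i. y i - x i)"
      define q where "q = (\<lambda>i. z i - x i)"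
      define s where "s = (\<lambda>i. p i + q i)"
      define d where "d = (\<lambda>i. y i - z i)"
      have pC: "p \<in> C" unfolding p_def using diff_in[OF assms xC yC] .
      have qC: "q \<in> C" unfolding q_def using diff_in[OF assms xC zC] .
      have sC: "s \<in> C" unfolding s_def using add_in[OF assms qC pC] .
      have dC: "d \<in> C" unfolding d_def using diff_in[OF assms zC yC] .
      show False
      proof (cases "\<exists>i<n. p i \<noteq> 0 \<and> q i \<noteq> 0")
        case True
        then obtain k where k: "k < n" "p k \<noteq> 0" "q k \<noteq> 0" by blast
        have "supp n d \<subset> supp n s"
        proof
          show "supp n d \<subseteq> supp n s"
          proof
            fix i assume "i \<in> supp n d"
            then have "i < n" "y i - z i \<noteq> 0" unfolding supp_def d_def by auto
            then have "(y i - x i) + (z i - x i) \<noteq> 0" using p4[OF nd] by blast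
            then show "i \<in> supp n s" using \<open>i < n\<close> unfolding supp_def s_def p_def q_def by auto
          qed
          have "d k = 0 \<and> s k \<noteq> 0" using p5[OF nd[OF k(1)]] k unfolding d_def s_def p_def q_def by blast
          then have "k \<in> supp n s" "k \<notin> supp n d" using k(1) unfolding supp_def by auto
          then show "supp n d \<noteq> supp n s" by blast
        qed
        then have "d = (\<lambda>_. 0)" using M dC sC unfolding minimal_code_def by blast
        then have "y = z" unfolding d_def by (intro ext) (drule fun_cong, simp)
        then show False using dist by blast
      next
        case False
        have "q \<noteq> (\<lambda>_. 0)"
        proof
          assume "q = (\<lambda>_. 0)"
          then have "z = x" unfolding q_def by (intro ext) (drule fun_cong, simp)
          then show False using dist by blast
        qed
        then obtain k where k: "k < n" "q k \<noteq> 0" using nz_lt[OF assms qC] by blast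
        then have pk: "p k = 0" using False by blast
        have "supp n p \<subset> supp n s"
        proof
          show "supp n p \<subseteq> supp n s"
            unfolding supp_def s_def using False by auto
          have "k \<in> supp n s" "k \<notin> supp n p" using k pk unfolding supp_def s_def by auto
          then show "supp n p \<noteq> supp n s" by blast
        qed
        then have "p = (\<lambda>_. 0)" using M pC sC unfolding minimal_code_def by blast
        then have "y = x" unfolding p_def by (intro ext) (drule fun_cong, simp)
        then show False using dist by blast
      qed
    qed
  qed
qed

end
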